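(* Let $g(v;a)=v(1-v)(v-a)$, $k>0$, $a\in(0,1)$, and $$d_0(a,k)=\frac{1}{k+1}\min\{k\,d^+(a,k),\,d^-(a)\},\quad d^-(a)=\max_{y\in(a,1)}\frac{g(y;a)}{y},\quad d^+(a,k)=\max_{y\in(1-a,1)}\frac{-g(1-y;a)}{ky}.$$ Then for every $0<d<d_0(a,k)$ the following condition holds: with $h(v)=(k+1)v-\frac1d g(v;a)$, there exist $y_0\in(0,a)$ and $y_1\in(a,1)$ such that $h(y_0)>k+1$, $h(y_1)<0$, and $h'(v)>0$ for all $v\in(0,y_0)\cup(y_1,1)$. *)

theory Defs
  imports "HOL-Analysis.Analysis"
begin

definition g :: "real \<Rightarrow> real \<Rightarrow> real" where
  "g v a = v * (1 - v) * (v - a)"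

definition d_minus :: "real \<Rightarrow> real" where
  "d_minus a = (SUP y\<in>{a<..<1}. g y a / y)"

definition d_plus :: "real \<Rightarrow> real \<Rightarrow> real" where
  "d_plus a k = (SUP y\<in>{1-a<..<1}. - g (1 - y) a / (k * y))"

definition d0 :: "real \<Rightarrow> real \<Rightarrow> real" where
  "d0 a k = (1 / (k + 1)) * min (k * d_plus a k) (d_minus a)"

end

theory Submission
  imports Defs
begin

lemma dplus_bound:
  assumes "k > 0" "0 < a" "a < 1"
  shows "d_plus a k \<le> a^2 / (4*k)"
  unfolding d_plus_def
proof (rule cSUP_least)
  show "{1 - a<..<1} \<noteq> {}" using assms by auto
next
  fix y assume y: "y \<in> {1-a<..<1}"
  have "- g (1 - y) a / (k * y) = (1-y) * (a-(1-y)) / k"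
    using y assms by (simp add: g_def field_simps)
  also have "\<dots> \<le> a^2/(4*k)"
  proof -
    have e: "a^2/4 - (1-y) * (a-(1-y)) = (1-y-a/2)^2" by (simp add: power2_eq_square field_simps)
    have "0 \<le> (1-y-a/2)^2" by simp
    hence "(1-y) * (a-(1-y)) \<le> a^2/4" using e by linarith
    hence "(1-y) * (a-(1-y)) / k \<le> (a^2/4) / k" using assms by (intro divide_right_mono) auto
    thus ?thesis by simp
  qed
  finally show "- g (1 - y) a / (k * y) \<le> a^2/(4*k)" .
qed

lemma dminus_bound:
  assumes "0 < a" "a < 1"
  shows "d_minus a \<le> (1-a)^2 / 4"
  unfolding d_minus_def
proof (rule cSUP_least)
  show "{a<..<1} \<noteq> {}" using assms by auto
next
  fix y assume y: "y \<in> {a<..<1}"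
  have "g y a / y = (1-y) * (y-a)"
    using y assms by (simp add: g_def field_simps)
  also have "\<dots> \<le> (1-a)^2/4"
  proof -
    have e: "(1-a)^2/4 - (1-y) * (y-a) = (y-(1+a)/2)^2" by (simp add: power2_eq_square field_simps)
    have "0 \<le> (y-(1+a)/2)^2" by simp
    thus ?thesis using e by linarith
  qed
  finally show "g y a / y \<le> (1-a)^2/4" .
qed

lemma deriv_h:
  fixes k d a v :: real
  shows
  "deriv (\<lambda>v. (k + 1) * v - (1 / d) * g v a) v =
     (k+1) - (1/d) * ((1-v) * (v-a) - v * (v-a) + v * (1-v))"
proof (rule DERIV_imp_deriv)
  show "((\<lambda>v. (k + 1) * v - (1 / d) * g v a) has_field_derivative
     (k+1) - (1/d) * ((1-v) * (v-a) - v * (v-a) + v * (1-v))) (at v)"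
    unfolding g_def
    by (rule derivative_eq_intros refl | simp add: algebra_simps)+
qed

lemma sq1: "(a/2 - t)*(a - (a/2 - t)) = a^2/4 - (t::real)^2"
  by (simp add: power2_eq_square field_simps)

lemma sq2: "(1 - ((1+a)/2 + t))*(((1+a)/2 + t) - a) = (1-a)^2/4 - (t::real)^2"
  by (simp add: power2_eq_square field_simps)

theorem lemma8p4:
  fixes a k d :: real
  assumes "k > 0" and "0 < a" and "a < 1"
    and "0 < d" and "d < d0 a k"
  defines "h \<equiv> (\<lambda>v. (k + 1) * v - (1 / d) * g v a)"
  shows "\<exists>y0 y1. y0 \<in> {0<..<a} \<and> y1 \<in> {a<..<1} \<and> h y0 > k + 1 \<and> h y1 < 0 \<and>
           (\<forall>v \<in> {0<..<y0} \<union> {y1<..<1}. deriv h v > 0)"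
proof -
  define c where "c = d*(k+1)"
  have c0: "c > 0" using assms by (simp add: c_def)
  define m where "m = min (k * d_plus a k) (d_minus a)"
  have "d*(k+1) < ((1/(k+1))*m)*(k+1)"
    using assms(5) assms(1) unfolding d0_def m_def by (intro mult_strict_right_mono) auto
  hence cm: "c < m" using assms(1) by (simp add: c_def)
  have "k * d_plus a k \<le> k * (a^2/(4*k))"
    using dplus_bound[OF assms(1-3)] assms(1) by (intro mult_left_mono) auto
  also have "\<dots> = a^2/4" using assms(1) by simp
  finally have c1: "c < a^2/4" using cm unfolding m_def by linarith
  have c2: "c < (1-a)^2/4" using cm dminus_bound[OF assms(2,3)] unfolding m_def by linarith
  have dh: "deriv h v > 0 \<longleftrightarrow> (1-v) * (v-a) - v * (v-a) + v * (1-v) < c" for v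
    using assms(4) unfolding h_def deriv_h c_def by (simp add: field_simps)
  define s where "s = a^2/4 - c"
  define t where "t = sqrt (s/2)"
  define y0 where "y0 = a/2 - t"
  have s0: "s > 0" using c1 by (simp add: s_def)
  have t0: "t > 0" using s0 by (simp add: t_def)
  have tt: "t^2 = s/2" using s0 by (simp add: t_def)
  have ta: "t < a/2"
  proof -
    have "t^2 < a^2/4" using tt c0 unfolding s_def by (simp add: field_simps) (use zero_le_power2[of t] in linarith)
    hence "t^2 < (a/2)^2" by (simp add: power_divide)
    hence "sqrt (t^2) < sqrt ((a/2)^2)" by (simp only: real_sqrt_less_iff)
    thus ?thesis using assms(2) t0 by simp
  qed
  have y0: "y0 \<in> {0<..<a}" using ta t0 by (simp add: y0_def)
  have psi0: "y0*(a-y0) = c + s/2"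
  proof -
    have "y0*(a-y0) = a^2/4 - t^2" unfolding y0_def by (rule sq1)
    thus ?thesis using tt unfolding s_def by (simp add: field_simps)
  qed
  have hy0: "h y0 > k+1"
  proof -
    have "h y0 - (k+1) = (1-y0) * (y0*(a-y0)/d - (k+1))"
      unfolding h_def g_def using assms(4) by (simp add: field_simps)
    moreover have "y0*(a-y0)/d > k+1" using psi0 s0 assms(4) by (simp add: c_def field_simps)
    moreover have "1 - y0 > 0" using y0 assms(3) by simp
    ultimately show ?thesis using mult_pos_pos[of "1-y0" "y0 * (a-y0)/d - (k+1)"] by linarith
  qed
  define s' where "s' = (1-a)^2/4 - c"
  define t' where "t' = sqrt (s'/2)"
  define y1 where "y1 = (1+a)/2 + t'"
  have s'0: "s' > 0" using c2 by (simp add: s'_def)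
  have t'0: "t' > 0" using s'0 by (simp add: t'_def)
  have tt': "t'^2 = s'/2" using s'0 by (simp add: t'_def)
  have ta': "t' < (1-a)/2"
  proof -
    have "t'^2 < (1-a)^2/4" using tt' c0 unfolding s'_def by (simp add: field_simps) (use zero_le_power2[of t'] in linarith)
    hence "t'^2 < ((1-a)/2)^2" by (simp add: power_divide)
    hence "sqrt (t'^2) < sqrt (((1-a)/2)^2)" by (simp only: real_sqrt_less_iff)
    thus ?thesis using assms(3) t'0 by simp
  qed
  have y1: "y1 \<in> {a<..<1}" using ta' t'0 assms(2,3) unfolding y1_def by (simp add: field_simps)
  have phi1: "(1-y1) * (y1-a) = c + s'/2"
  proof -
    have "(1-y1) * (y1-a) = (1-a)^2/4 - t'^2" by (simp add: y1_def power2_eq_square field_simps)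
    thus ?thesis using tt' unfolding s'_def by (simp add: field_simps)
  qed
  have hy1: "h y1 < 0"
  proof -
    have "h y1 = y1*((k+1) - (1-y1) * (y1-a)/d)"
      unfolding h_def g_def using assms(4) by (simp add: field_simps)
    moreover have "(1-y1) * (y1-a)/d > k+1" using phi1 s'0 assms(4) by (simp add: c_def field_simps)
    moreover have "y1 > 0" using y1 assms(2) by simp
    ultimately show ?thesis using mult_pos_pos[of "y1" "(1-y1) * (y1-a)/d - (k+1)"] by (simp add: algebra_simps)
  qed
  have D: "deriv h v > 0" if v: "v \<in> {0<..<y0} \<union> {y1<..<1}" for v
  proof (cases "v < y0")
    case True
    hence v0: "0 < v" "v < y0" using v y0 y1 by auto
    have "v * (a-v) \<le> y0*(a-y0)"
    proof -
      have "y0*(a-y0) - v * (a-v) = (y0 - v) * (a - y0 - v)" by (simp add: algebra_simps)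
      moreover have "a - y0 - v > 0" using v0 ta t0 y0_def by simp
      ultimately show ?thesis using v0 mult_pos_pos[of "y0 - v" "a - y0 - v"] by linarith
    qed
    moreover have "(1-v) * (a-2* v) \<ge> (1-y0) * (a-2*y0)"
      using v0 y0 assms(3) ta t0 unfolding y0_def
      by (intro mult_mono) auto
    moreover have "(1-y0) * (a-2*y0) = (1-y0) * (2*t)" by (simp add: y0_def)
    moreover have "(1-y0) * (2*t) > s/2"
    proof -
      have "1 - y0 > 1/2" using assms(3) t0 y0_def by simp
      hence "1 * t < (2*(1-y0)) * t" using t0 by (intro mult_strict_right_mono) auto
      hence "(1-y0) * (2*t) > t" by (simp add: algebra_simps)
      moreover have "t * t < 1 * t" using ta assms(3) t0 by (intro mult_strict_right_mono) auto
      hence "t^2 < t" by (simp add: power2_eq_square)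
      ultimately show ?thesis using tt by simp
    qed
    moreover have "(1-v) * (v-a) - v * (v-a) + v * (1-v) = v * (a-v) - (1-v) * (a-2* v)"
      by (simp add: algebra_simps)
    ultimately have "(1-v) * (v-a) - v * (v-a) + v * (1-v) < c"
      using psi0 by linarith
    thus ?thesis using dh by simp
  next
    case False
    hence v1: "y1 < v" "v < 1" using v y0 y1 by auto
    have "(1-v) * (v-a) \<le> (1-y1) * (y1-a)"
    proof -
      have "(1-y1) * (y1-a) - (1-v) * (v-a) = (v - y1) * (v + y1 - 1 - a)" by (simp add: algebra_simps)
      moreover have "v + y1 - 1 - a > 0" using v1 t'0 y1_def by (simp add: field_simps)
      ultimately show ?thesis using v1 mult_pos_pos[of "v - y1" "v + y1 - 1 - a"] by linarith
    qed
    moreover have "v * (2* v-1-a) \<ge> y1*(2*y1-1-a)"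
      using v1 y1 assms(2) ta' t'0 unfolding y1_def
      by (intro mult_mono) (auto simp: field_simps)
    moreover have "y1*(2*y1-1-a) = y1*(2*t')" unfolding y1_def by (simp add: field_simps)
    moreover have "y1*(2*t') > s'/2"
    proof -
      have "y1 > 1/2" using assms(2) t'0 unfolding y1_def by (simp add: field_simps)
      hence "1 * t' < (2*y1) * t'" using t'0 by (intro mult_strict_right_mono) auto
      hence "y1*(2*t') > t'" by (simp add: algebra_simps)
      moreover have "t' * t' < 1 * t'" using ta' assms(2) t'0 by (intro mult_strict_right_mono) auto
      hence "t'^2 < t'" by (simp add: power2_eq_square)
      ultimately show ?thesis using tt' by simp
    qed
    moreover have "(1-v) * (v-a) - v * (v-a) + v * (1-v) = (1-v) * (v-a) - v * (2* v-1-a)"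
      by (simp add: algebra_simps)
    ultimately have "(1-v) * (v-a) - v * (v-a) + v * (1-v) < c"
      using phi1 by linarith
    thus ?thesis using dh by simp
  qed
  show ?thesis using y0 y1 hy0 hy1 D by blast
qed

end
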